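(* Let $d\ge 2$ be an integer and $\delta\in(0,d]$ real. Let $P$ be a set of $n$ points in $\mathbb{R}^d$ with $\dim_{\mathsf f}(P)=\delta$, and let $W$ be the set of edges (straight segments) of any optimal Euclidean traveling salesman tour of $P$. Then there exists a $(d-1)$-sphere $C$ such that at most $(1-2^{-O(d)})n$ points of $P$ lie in the interior of $C$, at most $(1-2^{-O(d)})n$ points of $P$ lie outside $C$, and $W_C=\{w\in W: w\cap C\neq\emptyset\}$ satisfies $$|W_C|=\begin{cases}O(n^{1-1/\delta}) & \delta>1,\\ O(\log n) & \delta=1,\\ O\!\left(\frac{1}{2^{1-\delta}-1}\right) & \delta<1.\end{cases}$$
   Context: Fractal dimension: for a family of finite pointsets $P\subseteq\mathbb{R}^d$ (with $|P|$ unbounded), $\dim_{\mathsf f}(P)$ is the infimum of $\delta$ such that there is a constant $c$ with: for every member $P$, every $\varepsilon>0$, every $r\ge2\varepsilon$, every $\varepsilon$-net $N$ of $P$ (a subset of $P$ whose points are pairwise at distance $\ge\varepsilon$ and such that every point of $P$ is within distance $\varepsilon$ of $N$) and every $x\in\mathbb{R}^d$, $|N\cap\mathrm{ball}(x,r)|\le c(r/\varepsilon)^\delta$, where $\mathrm{ball}(x,r)$ is the closed Euclidean ball. Asymptotic notation is as $n\to\infty$; hidden constants may depend on $d$, $\delta$, $c$. *)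

theory Defs
  imports "HOL-Analysis.Analysis"
begin

definition eps_net :: "'a::euclidean_space set \<Rightarrow> 'a set \<Rightarrow> real \<Rightarrow> bool" where
  "eps_net N P eps \<longleftrightarrow> N \<subseteq> P
     \<and> (\<forall>p\<in>N. \<forall>q\<in>N. p \<noteq> q \<longrightarrow> dist p q \<ge> eps)
     \<and> (\<forall>p\<in>P. \<exists>q\<in>N. dist p q \<le> eps)"

text \<open>The packing condition defining fractal dimension, with exponent delta and constant c.\<close>
definition fractal_bound :: "real \<Rightarrow> real \<Rightarrow> 'a::euclidean_space set \<Rightarrow> bool" where
  "fractal_bound delta c P \<longleftrightarrow>
     (\<forall>eps r N x. eps > 0 \<longrightarrow> r \<ge> 2 * eps \<longrightarrow> eps_net N P eps \<longrightarrow>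
        real (card (N \<inter> cball x r)) \<le> c * (r / eps) powr delta)"

definition tsp_tour :: "'a::euclidean_space set \<Rightarrow> 'a list \<Rightarrow> bool" where
  "tsp_tour P xs \<longleftrightarrow> distinct xs \<and> set xs = P"

definition tour_length :: "'a::euclidean_space list \<Rightarrow> real" where
  "tour_length xs = (\<Sum>i<length xs. dist (xs ! i) (xs ! (Suc i mod length xs)))"

definition optimal_tour :: "'a::euclidean_space set \<Rightarrow> 'a list \<Rightarrow> bool" where
  "optimal_tour P xs \<longleftrightarrow> tsp_tour P xs \<and>
     (\<forall>ys. tsp_tour P ys \<longrightarrow> tour_length xs \<le> tour_length ys)"

definition tour_edge :: "'a::euclidean_space list \<Rightarrow> nat \<Rightarrow> 'a set" where
  "tour_edge xs i = closed_segment (xs ! i) (xs ! (Suc i mod length xs))"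

definition sep_bound :: "real \<Rightarrow> nat \<Rightarrow> real" where
  "sep_bound delta n =
     (if delta > 1 then real n powr (1 - 1 / delta)
      else if delta = 1 then ln (real n)
      else 1 / (2 powr (1 - delta) - 1))"

end

theory Submission
  imports Defs
begin


fun pl :: "'a::euclidean_space list \<Rightarrow> real" where
  "pl (a # b # rest) = dist a b + pl (b # rest)"
| "pl _ = 0"

lemma pl_append: "pl (xs @ y # ys) = pl (xs @ [y]) + pl (y # ys)"
  by (induction xs rule: pl.induct) (auto simp: Cons_eq_append_conv)

lemma pl_rev: "pl (rev xs) = pl xs"
proof (induction xs rule: pl.induct)
  case (1 a b rest)
  have "pl (rev (a # b # rest)) = pl (rev rest @ b # [a])" by simp
  also have "\<dots> = pl (rev rest @ [b]) + pl [b, a]" by (rule pl_append)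
  also have "\<dots> = pl (b # rest) + dist a b" using 1 by (simp add: dist_commute)
  finally show ?case by simp
qed auto

lemma pl_sum: "pl xs = (\<Sum>i<length xs - 1. dist (xs ! i) (xs ! Suc i))"
proof (induction xs rule: pl.induct)
  case (1 a b rest)
  have "(\<Sum>i<length (a#b#rest) - 1. dist ((a#b#rest) ! i) ((a#b#rest) ! Suc i))
      = dist a b + (\<Sum>i<length (b#rest) - 1. dist ((b#rest) ! i) ((b#rest) ! Suc i))"
    by (simp add: sum.lessThan_Suc_shift del: sum.lessThan_Suc)
  then show ?case using 1 by simp
qed auto

lemma tour_length_pl:
  assumes "xs \<noteq> []"
  shows "tour_length xs = pl (xs @ [xs ! 0])"
proof -
  let ?n = "length xs"
  let ?L = "xs @ [xs ! 0]"
  have "pl ?L = (\<Sum>i<?n. dist (?L ! i) (?L ! Suc i))" by (simp add: pl_sum)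
  also have "\<dots> = (\<Sum>i<?n. dist (xs ! i) (xs ! (Suc i mod ?n)))"
  proof (rule sum.cong)
    fix i assume "i \<in> {..<?n}"
    then have i: "i < ?n" by simp
    show "dist (?L ! i) (?L ! Suc i) = dist (xs ! i) (xs ! (Suc i mod ?n))"
    proof (cases "Suc i < ?n")
      case True then show ?thesis using i by (simp add: nth_append)
    next
      case False then have "Suc i = ?n" using i by simp
      then show ?thesis using i by (simp add: nth_append)
    qed
  qed simp
  finally show ?thesis unfolding tour_length_def by simp
qed

lemma two_opt:
  assumes opt: "optimal_tour P xs" and ij: "i < j" "j < length xs"
  shows "dist (xs ! i) (xs ! (Suc i mod length xs)) + dist (xs ! j) (xs ! (Suc j mod length xs))
       \<le> dist (xs ! i) (xs ! j) + dist (xs ! (Suc i mod length xs)) (xs ! (Suc j mod length xs))"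
proof -
  let ?n = "length xs"
  have tour: "tsp_tour P xs" using opt by (simp add: optimal_tour_def)
  have ne: "xs \<noteq> []" using ij by auto
  let ?L = "xs @ [xs ! 0]"
  define A where "A = take i ?L"
  define M where "M = take (j - i) (drop (Suc i) ?L)"
  define C where "C = drop (Suc (Suc j)) ?L"
  define ys where "ys = take (Suc i) xs @ rev M @ drop (Suc j) xs"
  have si: "Suc i mod ?n = Suc i" using ij by simp
  have Lsplit: "?L = A @ [xs ! i] @ M @ [?L ! Suc j] @ C"
  proof -
    have "?L = take i ?L @ drop i ?L" by (rule append_take_drop_id[symmetric])
    also have "drop i ?L = ?L ! i # drop (Suc i) ?L" by (rule Cons_nth_drop_Suc[symmetric]) (use ij in simp)
    also have "drop (Suc i) ?L = M @ drop (Suc j) ?L"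
      unfolding M_def using ij by (metis Suc_diff_le add_Suc_right append_take_drop_id drop_drop le_add_diff_inverse2 less_imp_le_nat plus_1_eq_Suc)
    also have "drop (Suc j) ?L = ?L ! Suc j # C"
      unfolding C_def by (rule Cons_nth_drop_Suc[symmetric]) (use ij in simp)
    finally have "?L = take i ?L @ ?L ! i # M @ ?L ! Suc j # C" .
    moreover have "?L ! i = xs ! i" using ij by (simp add: nth_append)
    ultimately show ?thesis unfolding A_def by (simp only: append_Cons append_Nil)
  qed
  have Mne: "M \<noteq> []" unfolding M_def using ij by simp
  have hdM: "hd M = xs ! Suc i" unfolding M_def using ij
    by (simp add: hd_take hd_drop_conv_nth nth_append)
  have lenM: "length M = j - i" unfolding M_def using ij by simp
  have lastM: "last M = xs ! j"
  proof -
    have "last M = M ! (j - i - 1)" using Mne lenM by (simp add: last_conv_nth)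
    also have "\<dots> = ?L ! (Suc i + (j - i - 1))" unfolding M_def using ij by (simp add: nth_append_left)
    also have "Suc i + (j - i - 1) = j" using ij by simp
    finally show ?thesis using ij by (simp add: nth_append_left)
  qed
  have w: "?L ! Suc j = xs ! (Suc j mod ?n)"
  proof (cases "Suc j < ?n")
    case False then have "Suc j = ?n" using ij by simp
    then show ?thesis by (simp add: nth_append)
  qed (simp add: nth_append)
  have MM: "M = take (j - i) (drop (Suc i) xs)" unfolding M_def using ij
    by (simp add: take_append)
  have xsplit: "xs = take (Suc i) xs @ M @ drop (Suc j) xs" unfolding MM using ij
    by (metis Suc_leI append.assoc append_take_drop_id drop_drop le_add_diff_inverse2 less_imp_le_nat take_add plus_1_eq_Suc add.commute add_Suc_right Suc_diff_le)
  have tA: "take (Suc i) xs = A @ [xs ! i]" unfolding A_def using ij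
    by (simp add: take_Suc_conv_app_nth)
  have dC: "drop (Suc j) xs @ [xs ! 0] = [?L ! Suc j] @ C"
  proof -
    have "drop (Suc j) xs @ [xs ! 0] = drop (Suc j) ?L" using ij by simp
    also have "\<dots> = ?L ! Suc j # C" unfolding C_def by (rule Cons_nth_drop_Suc[symmetric]) (use ij in simp)
    finally show ?thesis by simp
  qed
  have ys0: "ys ! 0 = xs ! 0" unfolding ys_def using ij by (simp add: nth_append)
  have ysL: "ys @ [ys ! 0] = A @ [xs ! i] @ rev M @ [?L ! Suc j] @ C"
    unfolding ys0 using dC tA unfolding ys_def by simp
  have ys_tour: "tsp_tour P ys"
  proof -
    have d: "distinct (take (Suc i) xs @ M @ drop (Suc j) xs)" "set (take (Suc i) xs @ M @ drop (Suc j) xs) = P"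
      using tour xsplit unfolding tsp_tour_def by metis+
    then show ?thesis unfolding tsp_tour_def ys_def by auto
  qed
  have "tour_length xs \<le> tour_length ys" using opt ys_tour by (simp add: optimal_tour_def)
  moreover have "ys \<noteq> []" unfolding ys_def using ne by simp
  ultimately have "pl ?L \<le> pl (ys @ [ys ! 0])" using ne by (simp add: tour_length_pl)
  also note ysL
  finally have ineq: "pl (A @ [xs ! i] @ M @ [?L ! Suc j] @ C) \<le> pl (A @ [xs ! i] @ rev M @ [?L ! Suc j] @ C)"
    using Lsplit by simp
  obtain m ms where Mc: "M = m # ms" using Mne by (cases M) auto
  have e1: "pl (A @ [u] @ N @ [w] @ C) = pl (A @ [u]) + dist u (hd N) + pl N + dist (last N) w + pl (w # C)"
    if Nne: "N \<noteq> []" for u w and N :: "'a list"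
  proof -
    obtain n ns where N: "N = n # ns" using Nne by (cases N) auto
    have "pl (A @ [u] @ N @ [w] @ C) = pl (A @ [u]) + pl (u # N @ [w] @ C)"
      using pl_append[of A u "N @ [w] @ C"] by simp
    also have "pl (u # N @ [w] @ C) = dist u (hd N) + pl (N @ [w] @ C)" using N by simp
    also have "pl (N @ [w] @ C) = pl (N @ [w]) + pl (w # C)" using pl_append[of N w C] by simp
    also have "pl (N @ [w]) = pl N + dist (last N) w"
    proof -
      have bl: "butlast N @ [last N] = N" using Nne by (rule append_butlast_last_id)
      have "pl (butlast N @ last N # [w]) = pl (butlast N @ [last N]) + pl [last N, w]"
        by (rule pl_append)
      moreover have "butlast N @ last N # [w] = N @ [w]" using bl by (metis append.assoc append_Cons append_Nil)
      ultimately have "pl (N @ [w]) = pl N + pl [last N, w]" using bl by metis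
      then show ?thesis by simp
    qed
    finally show ?thesis by simp
  qed
  have "pl (A @ [xs ! i] @ M @ [?L ! Suc j] @ C) = pl (A @ [xs ! i]) + dist (xs ! i) (xs ! Suc i) + pl M + dist (xs ! j) (?L ! Suc j) + pl (?L ! Suc j # C)"
    using e1[OF Mne] hdM lastM by simp
  moreover have "pl (A @ [xs ! i] @ rev M @ [?L ! Suc j] @ C) = pl (A @ [xs ! i]) + dist (xs ! i) (xs ! j) + pl M + dist (xs ! Suc i) (?L ! Suc j) + pl (?L ! Suc j # C)"
    using e1[of "rev M"] Mne hdM lastM by (simp add: hd_rev last_rev pl_rev)
  ultimately show ?thesis using ineq si w by simp
qed


lemma cover_const:
  fixes t :: real assumes t: "t > 0"
  obtains K :: nat where "\<And>(z::'a::euclidean_space) r. r > 0 \<Longrightarrow>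
     \<exists>F. finite F \<and> card F \<le> K \<and> cball z r \<subseteq> (\<Union>f\<in>F. cball f (t*r))"
proof -
  have "compact (cball (0::'a) 1)" by simp
  moreover have "cball (0::'a) 1 \<subseteq> (\<Union>x\<in>UNIV. ball x t)"
  proof
    fix y :: 'a assume "y \<in> cball 0 1"
    show "y \<in> (\<Union>x\<in>UNIV. ball x t)" using t by (intro UN_I[of y]) auto
  qed
  ultimately obtain C where C: "finite C" "cball (0::'a) 1 \<subseteq> (\<Union>x\<in>C. ball x t)"
    using compactE_image[of "cball (0::'a) 1" UNIV "\<lambda>x. ball x t"] by auto
  have "\<exists>F. finite F \<and> card F \<le> card C \<and> cball z r \<subseteq> (\<Union>f\<in>F. cball f (t*r))"
    if r: "r > 0" for z :: 'a and r
  proof (intro exI conjI)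
    let ?F = "(\<lambda>x. z + r *\<^sub>R x) ` C"
    show "finite ?F" using C by simp
    show "card ?F \<le> card C" by (rule card_image_le[OF C(1)])
    show "cball z r \<subseteq> (\<Union>f\<in>?F. cball f (t*r))"
    proof
      fix y assume y: "y \<in> cball z r"
      define u where "u = (1/r) *\<^sub>R (y - z)"
      have nu: "norm u = norm (y - z) / r" unfolding u_def using r by simp
      have "norm (y - z) \<le> r" using y by (simp add: dist_norm norm_minus_commute)
      then have "norm u \<le> 1" unfolding nu using r by simp
      then have "u \<in> cball 0 1" by simp
      with C obtain x where x: "x \<in> C" "dist x u < t" by auto
      have yu: "y = z + r *\<^sub>R u" unfolding u_def using r by simp
      have "dist (z + r *\<^sub>R x) y = r * dist x u"
        unfolding yu dist_norm using r
        by (simp add: scaleR_diff_right[symmetric] )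
      also have "\<dots> \<le> t * r" using x r by (simp add: mult.commute)
      finally show "y \<in> (\<Union>f\<in>?F. cball f (t*r))" using x by auto
    qed
  qed
  then show ?thesis using that by blast
qed



lemma net_exists:
  fixes P :: "'a::euclidean_space set"
  assumes "finite P" "eps > 0"
  shows "\<exists>N. eps_net N P eps"
proof -
  define S where "S = {N. N \<subseteq> P \<and> (\<forall>p\<in>N. \<forall>q\<in>N. p \<noteq> q \<longrightarrow> dist p q \<ge> eps)}"
  have fin: "finite S" unfolding S_def using assms(1) by simp
  have ne: "{} \<in> S" unfolding S_def by simp
  obtain N where N: "N \<in> S" "\<And>N'. N' \<in> S \<Longrightarrow> card N' \<le> card N"
  proof -
    have "Max (card ` S) \<in> card ` S" using fin ne by (intro Max_in) auto
    then obtain N where "N \<in> S" "card N = Max (card ` S)" by auto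
    moreover have "\<And>N'. N' \<in> S \<Longrightarrow> card N' \<le> Max (card ` S)" using fin by simp
    ultimately show ?thesis using that by metis
  qed
  have finN: "finite N" using N(1) assms(1) unfolding S_def by (auto intro: finite_subset)
  have "\<forall>p\<in>P. \<exists>q\<in>N. dist p q \<le> eps"
  proof (rule ccontr)
    assume "\<not> ?thesis"
    then obtain p where p: "p \<in> P" "\<And>q. q \<in> N \<Longrightarrow> dist p q > eps" by (auto simp: not_le)
    have pN: "p \<notin> N" using p(2)[of p] assms(2) by auto
    have "insert p N \<in> S" using N(1) p unfolding S_def
      by (auto simp: dist_commute less_imp_le)
    then have "card (insert p N) \<le> card N" by (rule N(2))
    then show False using pN finN by simp
  qed
  then show ?thesis using N(1) unfolding eps_net_def S_def by auto
qed



lemma trunc: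
  fixes p q x z :: "'a::euclidean_space"
  assumes x: "x \<in> closed_segment p q" and xz: "dist z x \<le> r" and l: "dist p q > 5*r" and r: "r > 0"
  shows "\<exists>a b. dist z a \<le> 2*r \<and> dist z b \<le> 2*r \<and> dist p a + dist a b + dist b q = dist p q \<and> dist a b \<ge> r"
proof -
  define ll where "ll = dist p q"
  have lpos: "ll > 0" using l r unfolding ll_def by auto
  define Pt where "Pt = (\<lambda>\<alpha>::real. p + \<alpha> *\<^sub>R (q - p))"
  have dPt: "dist (Pt a) (Pt b) = \<bar>a - b\<bar> * ll" for a b
  proof -
    have "Pt a - Pt b = (a - b) *\<^sub>R (q - p)" unfolding Pt_def by (simp add: algebra_simps)
    then show ?thesis unfolding ll_def dist_norm by (simp add: norm_minus_commute)
  qed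
  have P0: "Pt 0 = p" and P1: "Pt 1 = q" unfolding Pt_def by simp_all
  obtain s where s: "0 \<le> s" "s \<le> 1" "x = Pt s"
    using x unfolding closed_segment_def Pt_def by (auto simp: algebra_simps)
  have dxp: "dist x p = s * ll" using dPt[of s 0] s by (simp add: P0)
  have dxq: "dist x q = (1 - s) * ll" using dPt[of s 1] s by (simp add: P1)
  define \<alpha> where "\<alpha> = (if dist z p \<le> 2*r then 0 else s - r/ll)"
  define \<beta> where "\<beta> = (if dist z q \<le> 2*r then 1 else s + r/ll)"
  have rl: "r / ll * ll = r" using lpos by simp
  have a0: "0 \<le> \<alpha>" and as: "\<alpha> \<le> s"
  proof -
    show "\<alpha> \<le> s" unfolding \<alpha>_def using s r lpos by auto
    show "0 \<le> \<alpha>"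
    proof (cases "dist z p \<le> 2*r")
      case False
      have "dist z p \<le> dist z x + dist x p" by (rule dist_triangle)
      then have "s * ll \<ge> r" using False xz dxp by linarith
      then have "s \<ge> r / ll" using lpos by (simp add: field_simps)
      then show ?thesis unfolding \<alpha>_def using False by simp
    qed (simp add: \<alpha>_def)
  qed
  have b1: "\<beta> \<le> 1" and bs: "s \<le> \<beta>"
  proof -
    show "s \<le> \<beta>" unfolding \<beta>_def using s r lpos by auto
    show "\<beta> \<le> 1"
    proof (cases "dist z q \<le> 2*r")
      case False
      have "dist z q \<le> dist z x + dist x q" by (rule dist_triangle)
      then have "(1 - s) * ll \<ge> r" using False xz dxq by linarith
      then have "1 - s \<ge> r / ll" using lpos by (simp add: field_simps)
      then show ?thesis unfolding \<beta>_def using False by simp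
    qed (simp add: \<beta>_def)
  qed
  have za: "dist z (Pt \<alpha>) \<le> 2*r"
  proof (cases "dist z p \<le> 2*r")
    case True then show ?thesis by (simp add: \<alpha>_def P0)
  next
    case False
    have "dist z (Pt \<alpha>) \<le> dist z x + dist x (Pt \<alpha>)" by (rule dist_triangle)
    also have "dist x (Pt \<alpha>) = r" using False s(3) dPt[of s \<alpha>] r lpos unfolding \<alpha>_def by simp
    finally show ?thesis using xz by linarith
  qed
  have zb: "dist z (Pt \<beta>) \<le> 2*r"
  proof (cases "dist z q \<le> 2*r")
    case True then show ?thesis by (simp add: \<beta>_def P1)
  next
    case False
    have "dist z (Pt \<beta>) \<le> dist z x + dist x (Pt \<beta>)" by (rule dist_triangle)
    also have "dist x (Pt \<beta>) = r" using False s(3) dPt[of s \<beta>] r lpos unfolding \<beta>_def by simp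
    finally show ?thesis using xz by linarith
  qed
  have sum: "dist p (Pt \<alpha>) + dist (Pt \<alpha>) (Pt \<beta>) + dist (Pt \<beta>) q = ll"
    using dPt[of 0 \<alpha>] dPt[of \<alpha> \<beta>] dPt[of \<beta> 1] a0 as bs b1 P0 P1
    by (simp add: algebra_simps)
  have big: "dist (Pt \<alpha>) (Pt \<beta>) \<ge> r"
  proof -
    have "\<not> (dist z p \<le> 2*r \<and> dist z q \<le> 2*r)"
    proof
      assume h: "dist z p \<le> 2*r \<and> dist z q \<le> 2*r"
      have "dist p q \<le> dist p z + dist z q" by (rule dist_triangle)
      then show False using h l r by (simp add: dist_commute)
    qed
    then have "(\<beta> - \<alpha>) * ll \<ge> r"
      unfolding \<alpha>_def \<beta>_def using rl s r lpos as bs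
      by (auto simp: algebra_simps)
    then show ?thesis using dPt[of \<alpha> \<beta>] as bs by simp
  qed
  show ?thesis using za zb sum big unfolding ll_def by blast
qed



lemma packing_pair:
  fixes xs :: "'a::euclidean_space list"
  assumes opt: "optimal_tour P xs" and r: "r > 0" and ij: "i < j" "j < length xs"
    and e1: "dist (xs!i) a1 + dist a1 b1 + dist b1 (xs!(Suc i mod length xs)) = dist (xs!i) (xs!(Suc i mod length xs))"
    and e2: "dist (xs!j) a2 + dist a2 b2 + dist b2 (xs!(Suc j mod length xs)) = dist (xs!j) (xs!(Suc j mod length xs))"
    and l1: "dist a1 b1 \<ge> r" and l2: "dist a2 b2 \<ge> r"
    and close: "dist a1 a2 + dist b1 b2 < 2*r"
  shows False
proof -
  let ?n = "length xs"
  let ?p1 = "xs!i" and ?q1 = "xs!(Suc i mod ?n)" and ?p2 = "xs!j" and ?q2 = "xs!(Suc j mod ?n)"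
  have t: "dist ?p1 ?q1 + dist ?p2 ?q2 \<le> dist ?p1 ?p2 + dist ?q1 ?q2" by (rule two_opt[OF opt ij])
  have t1: "dist ?p1 ?p2 \<le> dist ?p1 a1 + dist a1 a2 + dist ?p2 a2"
    using dist_triangle[of ?p1 ?p2 a1] dist_triangle[of a1 ?p2 a2] by (simp add: dist_commute)
  have t2: "dist ?q1 ?q2 \<le> dist b1 ?q1 + dist b1 b2 + dist b2 ?q2"
    using dist_triangle[of ?q1 ?q2 b1] dist_triangle[of b1 ?q2 b2] by (simp add: dist_commute)
  show False using t t1 t2 e1 e2 l1 l2 close by linarith
qed

lemma packing:
  obtains Kp :: nat where "\<And>(P::'a::euclidean_space set) xs z r. optimal_tour P xs \<Longrightarrow> r > 0 \<Longrightarrow>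
    card {i. i < length xs \<and> dist (xs!i) (xs!(Suc i mod length xs)) > 5*r \<and> tour_edge xs i \<inter> cball z r \<noteq> {}} \<le> Kp"
proof -
  obtain K :: nat where K: "\<And>(z::'a) r. r > 0 \<Longrightarrow>
     \<exists>F. finite F \<and> card F \<le> K \<and> cball z r \<subseteq> (\<Union>f\<in>F. cball f ((1/5)*r))"
    using cover_const[of "1/5"] by auto
  have "card {i. i < length xs \<and> dist (xs!i) (xs!(Suc i mod length xs)) > 5*r \<and> tour_edge xs i \<inter> cball z r \<noteq> {}} \<le> K * K"
    if opt: "optimal_tour P xs" and r: "r > 0" for P :: "'a set" and xs z r
  proof -
    let ?n = "length xs"
    define I where "I = {i. i < length xs \<and> dist (xs!i) (xs!(Suc i mod length xs)) > 5*r \<and> tour_edge xs i \<inter> cball z r \<noteq> {}}"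
    obtain F where F: "finite F" "card F \<le> K" "cball z (2*r) \<subseteq> (\<Union>f\<in>F. cball f ((1/5)*(2*r)))"
      using K[of "2*r" z] r by auto
    define Q where "Q = (\<lambda>i (y :: ('a \<times> 'a) \<times> ('a \<times> 'a)).
        fst (snd y) \<in> F \<and> snd (snd y) \<in> F \<and> dist (fst (fst y)) (fst (snd y)) \<le> 2*r/5
        \<and> dist (snd (fst y)) (snd (snd y)) \<le> 2*r/5
        \<and> dist (xs!i) (fst (fst y)) + dist (fst (fst y)) (snd (fst y)) + dist (snd (fst y)) (xs!(Suc i mod ?n)) = dist (xs!i) (xs!(Suc i mod ?n))
        \<and> dist (fst (fst y)) (snd (fst y)) \<ge> r)"
    have "\<forall>i\<in>I. \<exists>y. Q i y"
    proof
      fix i assume "i \<in> I"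
      then have i: "dist (xs!i) (xs!(Suc i mod ?n)) > 5*r" "tour_edge xs i \<inter> cball z r \<noteq> {}"
        unfolding I_def by auto
      then obtain x where x: "x \<in> closed_segment (xs!i) (xs!(Suc i mod ?n))" "dist z x \<le> r"
        unfolding tour_edge_def by auto
      obtain a b where ab: "dist z a \<le> 2*r" "dist z b \<le> 2*r"
        "dist (xs!i) a + dist a b + dist b (xs!(Suc i mod ?n)) = dist (xs!i) (xs!(Suc i mod ?n))" "dist a b \<ge> r"
        using trunc[OF x i(1) r] by blast
      obtain fa where fa: "fa \<in> F" "dist fa a \<le> 2*r/5" using F(3) ab(1) by fastforce
      obtain fb where fb: "fb \<in> F" "dist fb b \<le> 2*r/5" using F(3) ab(2) by fastforce
      show "\<exists>y. Q i y" unfolding Q_def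
        by (rule exI[of _ "((a,b),(fa,fb))"]) (use ab fa fb in \<open>simp add: dist_commute\<close>)
    qed
    then obtain h where h: "\<And>i. i \<in> I \<Longrightarrow> Q i (h i)" by metis
    have nopair: False if "i \<in> I" "j \<in> I" "i < j" "snd (h i) = snd (h j)" for i j
    proof -
      have j: "j < ?n" using that(2) unfolding I_def by simp
      have Qi: "Q i (h i)" and Qj: "Q j (h j)" using h that by auto
      let ?a1 = "fst (fst (h i))" and ?b1 = "snd (fst (h i))" and ?a2 = "fst (fst (h j))" and ?b2 = "snd (fst (h j))"
      have "dist ?a1 ?a2 \<le> 4*r/5"
      proof -
        have "dist ?a1 ?a2 \<le> dist ?a1 (fst (snd (h i))) + dist ?a2 (fst (snd (h i)))" by (rule dist_triangle2)
        moreover have "dist ?a1 (fst (snd (h i))) \<le> 2*r/5" using Qi unfolding Q_def by simp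
        moreover have "dist ?a2 (fst (snd (h i))) \<le> 2*r/5" using Qj unfolding Q_def that(4) by simp
        ultimately show ?thesis by linarith
      qed
      moreover have "dist ?b1 ?b2 \<le> 4*r/5"
      proof -
        have "dist ?b1 ?b2 \<le> dist ?b1 (snd (snd (h i))) + dist ?b2 (snd (snd (h i)))" by (rule dist_triangle2)
        moreover have "dist ?b1 (snd (snd (h i))) \<le> 2*r/5" using Qi unfolding Q_def by simp
        moreover have "dist ?b2 (snd (snd (h i))) \<le> 2*r/5" using Qj unfolding Q_def that(4) by simp
        ultimately show ?thesis by linarith
      qed
      ultimately have cl: "dist ?a1 ?a2 + dist ?b1 ?b2 < 2*r" using r by linarith
      show False
        by (rule packing_pair[OF opt r that(3) j _ _ _ _ cl]) (use Qi Qj in \<open>simp_all add: Q_def\<close>)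
    qed
    have inj: "inj_on (\<lambda>i. snd (h i)) I"
    proof (rule inj_onI)
      fix i j assume "i \<in> I" "j \<in> I" "snd (h i) = snd (h j)"
      then show "i = j" using nopair[of i j] nopair[of j i] by (metis linorder_neqE_nat)
    qed
    have sub: "(\<lambda>i. snd (h i)) ` I \<subseteq> F \<times> F"
    proof
      fix y assume "y \<in> (\<lambda>i. snd (h i)) ` I"
      then obtain i where "i \<in> I" "y = snd (h i)" by auto
      then show "y \<in> F \<times> F" using h[of i] unfolding Q_def by (simp add: mem_Times_iff)
    qed
    have "card I = card ((\<lambda>i. snd (h i)) ` I)" using inj by (simp add: card_image)
    also have "\<dots> \<le> card (F \<times> F)" using sub F(1) by (intro card_mono) auto
    also have "\<dots> \<le> K * K" using F(2) by (simp add: card_cartesian_product mult_le_mono)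
    finally show ?thesis unfolding I_def .
  qed
  then show ?thesis using that by blast
qed



lemma minimal_radius:
  fixes P :: "'a::euclidean_space set"
  assumes fin: "finite P" and k: "2 \<le> k" "k \<le> card P"
  shows "\<exists>z R. z \<in> P \<and> R > 0 \<and> card (P \<inter> cball z R) \<ge> k \<and>
     (\<forall>q\<in>P. \<forall>r<R. card (P \<inter> cball q r) < k)"
proof -
  define D where "D = (\<lambda>(p,q). dist p q) ` (P \<times> P)"
  have finD: "finite D" unfolding D_def using fin by simp
  define G where "G = {r\<in>D. \<exists>p\<in>P. card (P \<inter> cball p r) \<ge> k}"
  have Pne: "P \<noteq> {}" using k by auto
  then obtain p0 where p0: "p0 \<in> P" by auto
  define r0 where "r0 = Max ((\<lambda>q. dist p0 q) ` P)"
  have "r0 \<in> (\<lambda>q. dist p0 q) ` P" unfolding r0_def using fin Pne by (intro Max_in) auto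
  then obtain q0 where q0: "q0 \<in> P" "r0 = dist p0 q0" by auto
  have r0D: "r0 \<in> D" unfolding D_def using q0 p0 by (intro image_eqI[of _ _ "(p0,q0)"]) auto
  have "P \<subseteq> cball p0 r0" unfolding r0_def using fin by (auto simp: mem_cball)
  then have "P \<inter> cball p0 r0 = P" by auto
  then have "r0 \<in> G" unfolding G_def using r0D p0 k by (intro CollectI conjI bexI[of _ p0]) auto
  then have Gne: "G \<noteq> {}" by auto
  have finG: "finite G" unfolding G_def using finD by simp
  define R where "R = Min G"
  have RG: "R \<in> G" unfolding R_def using finG Gne by (rule Min_in)
  then obtain z where z: "z \<in> P" "card (P \<inter> cball z R) \<ge> k" unfolding G_def by auto
  have minl: "\<forall>q\<in>P. \<forall>r<R. card (P \<inter> cball q r) < k"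
  proof (intro ballI allI impI)
    fix q r assume q: "q \<in> P" and rR: "r < R"
    show "card (P \<inter> cball q r) < k"
    proof (rule ccontr)
      assume "\<not> ?thesis"
      then have ge: "card (P \<inter> cball q r) \<ge> k" by simp
      define S where "S = P \<inter> cball q r"
      have finS: "finite S" unfolding S_def using fin by simp
      have Sne: "S \<noteq> {}" using ge k unfolding S_def by auto
      define r' where "r' = Max ((\<lambda>s. dist q s) ` S)"
      have r'in: "r' \<in> (\<lambda>s. dist q s) ` S" unfolding r'_def using finS Sne by simp
      then have r'D: "r' \<in> D" unfolding D_def S_def using q by auto
      have r'r: "r' \<le> r" using r'in unfolding S_def by auto
      have "P \<inter> cball q r' = S"
      proof
        show "P \<inter> cball q r' \<subseteq> S" unfolding S_def using r'r by auto
        show "S \<subseteq> P \<inter> cball q r'"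
        proof
          fix s assume "s \<in> S"
          then have "dist q s \<le> r'" unfolding r'_def using finS by simp
          then show "s \<in> P \<inter> cball q r'" using \<open>s \<in> S\<close> unfolding S_def by auto
        qed
      qed
      then have "r' \<in> G" unfolding G_def using r'D q ge S_def by (intro CollectI conjI bexI[of _ q]) auto
      then have "R \<le> r'" unfolding R_def using finG by simp
      then show False using r'r rR by simp
    qed
  qed
  have R0: "R \<ge> 0" using RG unfolding G_def D_def by auto
  have "R \<noteq> 0"
  proof
    assume "R = 0"
    then have "P \<inter> cball z R = {z}" using z by auto
    then show False using z k by simp
  qed
  then have "R > 0" using R0 by simp
  then show ?thesis using z minl by blast
qed

lemma balance:
  fixes delta c :: real assumes dpos: "delta > 0"
  obtains K' :: nat where "K' \<ge> 2" "\<And>P::'a::euclidean_space set. finite P \<Longrightarrow> card P > K' \<Longrightarrow> fractal_bound delta c P \<Longrightarrow>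
      \<exists>z R. R > 0 \<and> real (card (P \<inter> cball z R)) \<ge> real (card P) / K' \<and>
             real (card (P \<inter> cball z (2*R))) \<le> real (card P) / 2"
proof -
  define C5 where "C5 = max c 1 * 5 powr delta"
  have C5pos: "C5 > 0" unfolding C5_def by simp
  define K' where "K' = nat \<lceil>2 * C5\<rceil> + 2"
  have K'2: "K' \<ge> 2" unfolding K'_def by simp
  have K'C: "real K' \<ge> 2 * C5" unfolding K'_def by linarith
  have main: "\<exists>z R. R > 0 \<and> real (card (P \<inter> cball z R)) \<ge> real (card P) / K' \<and>
             real (card (P \<inter> cball z (2*R))) \<le> real (card P) / 2"
    if fin: "finite P" and big: "card P > K'" and fb: "fractal_bound delta c P" for P :: "'a set"
  proof -
    define n where "n = card P"
    define k where "k = nat \<lceil>real n / K'\<rceil>"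
    have Kpos: "real K' > 0" using K'2 by simp
    have nK: "real n / K' > 1" using big K'2 unfolding n_def by (simp add: field_simps)
    have k2: "k \<ge> 2" unfolding k_def using nK by linarith
    have kn: "k \<le> n"
    proof -
      have "real n / K' \<le> real n / 1" by (intro divide_left_mono) (use K'2 in auto)
      then show ?thesis unfolding k_def by linarith
    qed
    have kge: "real k \<ge> real n / K'" unfolding k_def by linarith
    have klt: "real k - 1 < real n / K'" unfolding k_def using nK by linarith
    obtain z R where zR: "z \<in> P" "R > 0" "card (P \<inter> cball z R) \<ge> k"
      "\<forall>q\<in>P. \<forall>r<R. card (P \<inter> cball q r) < k"
      using minimal_radius[OF fin k2 kn[unfolded n_def]] by blast
    obtain N where N: "eps_net N P (R/2)" using net_exists[OF fin, of "R/2"] zR(2) by auto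
    define Q where "Q = N \<inter> cball z (5*R/2)"
    have cardQ: "real (card Q) \<le> C5"
    proof -
      have fb': "\<And>eps r N x. eps>0 \<Longrightarrow> r \<ge> 2*eps \<Longrightarrow> eps_net N P eps \<Longrightarrow> real (card (N \<inter> cball x r)) \<le> c*(r/eps) powr delta"
        using fb unfolding fractal_bound_def by blast
      have "real (card Q) \<le> c * ((5*R/2) / (R/2)) powr delta"
        unfolding Q_def by (rule fb'[OF _ _ N]) (use zR(2) in auto)
      also have "(5*R/2) / (R/2) = 5" using zR(2) by simp
      also have "c * 5 powr delta \<le> C5" unfolding C5_def by (simp add: mult_right_mono)
      finally show ?thesis .
    qed
    have NP: "N \<subseteq> P" using N unfolding eps_net_def by simp
    have finQ: "finite Q" unfolding Q_def using NP by (intro finite_subset[OF _ fin]) auto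
    have cover: "P \<inter> cball z (2*R) \<subseteq> (\<Union>q\<in>Q. P \<inter> cball q (R/2))"
    proof
      fix p assume p: "p \<in> P \<inter> cball z (2*R)"
      have "\<forall>p\<in>P. \<exists>q\<in>N. dist p q \<le> R/2" using N unfolding eps_net_def by blast
      then obtain q where q: "q \<in> N" "dist p q \<le> R/2" using p by blast
      have "dist z q \<le> dist z p + dist p q" by (rule dist_triangle)
      then have "q \<in> Q" unfolding Q_def using p q by (auto simp: dist_commute)
      then show "p \<in> (\<Union>q\<in>Q. P \<inter> cball q (R/2))" using p q by (auto simp: dist_commute)
    qed
    have "card (P \<inter> cball z (2*R)) \<le> card (\<Union>q\<in>Q. P \<inter> cball q (R/2))"
      using cover fin by (intro card_mono) auto
    also have "\<dots> \<le> (\<Sum>q\<in>Q. card (P \<inter> cball q (R/2)))" by (rule card_UN_le[OF finQ])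
    also have "\<dots> \<le> (\<Sum>q\<in>Q. k - 1)"
    proof (rule sum_mono)
      fix q assume "q \<in> Q"
      then have "q \<in> P" using NP unfolding Q_def by auto
      moreover have "R/2 < R" using zR(2) by simp
      ultimately show "card (P \<inter> cball q (R/2)) \<le> k - 1" using zR(4) by fastforce
    qed
    also have "\<dots> = card Q * (k - 1)" by simp
    finally have c0: "card (P \<inter> cball z (2*R)) \<le> card Q * (k - 1)" .
    have "real (card Q * (k-1)) = real (card Q) * (real k - 1)" using k2 by (simp add: of_nat_diff)
    then have c1: "real (card (P \<inter> cball z (2*R))) \<le> real (card Q) * (real k - 1)"
      using c0 by (metis of_nat_le_iff)
    also have "\<dots> \<le> C5 * (real n / K')"
    proof (rule mult_mono)
      show "real k - 1 \<le> real n / real K'" using klt by simp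
      show "0 \<le> C5" using C5pos by simp
      show "0 \<le> real k - 1" using k2 by simp
    qed (rule cardQ)
    also have "\<dots> \<le> (real K' / 2) * (real n / K')" using K'C Kpos by (intro mult_right_mono) auto
    also have "\<dots> = real n / 2" using Kpos by simp
    finally have "real (card (P \<inter> cball z (2*R))) \<le> real n / 2" .
    moreover have "real (card (P \<inter> cball z R)) \<ge> real n / K'" using zR(3) kge by linarith
    ultimately show ?thesis using zR(2) unfolding n_def by blast
  qed
  show ?thesis using that[OF K'2] main by blast
qed



lemma seg_dist:
  fixes p q :: "'a::euclidean_space"
  assumes "y0 \<in> closed_segment p q" "y1 \<in> closed_segment p q"
  shows "dist y0 y1 \<le> dist p q"
proof -
  have "dist y0 y1 \<le> dist y0 p \<or> dist y0 y1 \<le> dist y0 q"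
    using dist_decreases_closed_segment[OF assms(2)] by simp
  moreover have "dist y0 p \<le> dist p q \<and> dist y0 q \<le> dist p q" using dist_in_closed_segment[OF assms(1)] .
  ultimately show ?thesis by linarith
qed

lemma radii_count:
  fixes p q z :: "'a::euclidean_space"
  assumes h: "h > 0"
  shows "real (card {k. k < M \<and> closed_segment p q \<inter> sphere z (R0 + real k * h) \<noteq> {}}) \<le> dist p q / h + 1"
proof -
  define S where "S = {k. k < M \<and> closed_segment p q \<inter> sphere z (R0 + real k * h) \<noteq> {}}"
  have finS: "finite S" unfolding S_def by simp
  show ?thesis
  proof (cases "S = {}")
    case True then show ?thesis unfolding S_def[symmetric] using h by simp
  next
    case False
    define k0 where "k0 = Min S"
    define k1 where "k1 = Max S"
    have k0S: "k0 \<in> S" and k1S: "k1 \<in> S" unfolding k0_def k1_def using finS False by simp_all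
    have sub: "S \<subseteq> {k0..k1}" unfolding k0_def k1_def using finS by auto
    obtain y0 where y0: "y0 \<in> closed_segment p q" "dist z y0 = R0 + real k0 * h"
      using k0S unfolding S_def by auto
    obtain y1 where y1: "y1 \<in> closed_segment p q" "dist z y1 = R0 + real k1 * h"
      using k1S unfolding S_def by auto
    have "k0 \<le> k1" using sub k0S by auto
    have "dist z y1 \<le> dist z y0 + dist y0 y1" by (rule dist_triangle)
    then have "(real k1 - real k0) * h \<le> dist p q" using y0 y1 seg_dist[OF y0(1) y1(1)]
      by (simp add: algebra_simps)
    then have kk: "real k1 - real k0 \<le> dist p q / h" using h by (simp add: field_simps)
    have "card S \<le> card {k0..k1}" using sub by (intro card_mono) auto
    also have "\<dots> = k1 + 1 - k0" by simp
    finally have "real (card S) \<le> real k1 + 1 - real k0" using \<open>k0 \<le> k1\<close> by linarith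
    then show ?thesis unfolding S_def[symmetric] using kk by linarith
  qed
qed

lemma below_avg:
  fixes f :: "nat \<Rightarrow> nat \<Rightarrow> bool"
  assumes M: "M > 0"
  shows "\<exists>k<M. real (card {i. i < n \<and> f i k}) * real M \<le> (\<Sum>i<n. real (card {k. k < M \<and> f i k}))"
proof (rule ccontr)
  assume "\<not> ?thesis"
  then have lt: "\<And>k. k < M \<Longrightarrow> (\<Sum>i<n. real (card {k. k < M \<and> f i k})) < real (card {i. i < n \<and> f i k}) * real M"
    by (auto simp: not_le)
  have c1: "real (card {i. i < n \<and> f i k}) = (\<Sum>i<n. if f i k then 1 else 0)" for k
  proof -
    have "{..<n} \<inter> {i. f i k} = {i. i < n \<and> f i k}" by auto
    then show ?thesis by (simp add: sum.If_cases)
  qed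
  have c2: "real (card {k. k < M \<and> f i k}) = (\<Sum>k<M. if f i k then 1 else 0)" for i
  proof -
    have "{..<M} \<inter> {k. f i k} = {k. k < M \<and> f i k}" by auto
    then show ?thesis by (simp add: sum.If_cases)
  qed
  have "(\<Sum>k<M. (\<Sum>i<n. real (card {k. k < M \<and> f i k}))) < (\<Sum>k<M. real (card {i. i < n \<and> f i k}) * real M)"
    using M lt by (intro sum_strict_mono) auto
  also have "(\<Sum>k<M. real (card {i. i < n \<and> f i k}) * real M) = real M * (\<Sum>k<M. real (card {i. i < n \<and> f i k}))"
    by (simp add: sum_distrib_left mult.commute)
  also have "(\<Sum>k<M. real (card {i. i < n \<and> f i k})) = (\<Sum>i<n. real (card {k. k < M \<and> f i k}))"
    unfolding c1 c2 by (rule sum.swap)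
  finally show False by simp
qed



lemma pow_identity:
  fixes d :: real
  shows "(2^j) powr d / 2^j = (2 powr (d-1))^j"
proof -
  have "(2::real)^j = 2 powr (real j)" by (simp add: powr_realpow)
  then have "(2^j) powr d / 2^j = 2 powr (real j * d) / 2 powr (real j)" by (simp add: powr_powr)
  also have "\<dots> = 2 powr (real j * d - real j)" by (simp add: powr_diff)
  also have "\<dots> = (2 powr (d-1)) powr (real j)" by (simp add: powr_powr algebra_simps)
  also have "\<dots> = (2 powr (d-1))^j" by (simp add: powr_realpow)
  finally show ?thesis .
qed

lemma tail_sum:
  "(\<Sum>j\<in>{T..<m}. (1/2::real)^j) \<le> 2 * (1/2)^T"
proof -
  have eq: "(\<Sum>j\<in>{T..<T+k}. (1/2::real)^j) = 2*(1/2)^T - 2*(1/2)^(T+k)" for k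
  proof (induction k)
    case (Suc k)
    have "(\<Sum>j\<in>{T..<T + Suc k}. (1/2::real)^j) = (\<Sum>j\<in>{T..<T+k}. (1/2::real)^j) + (1/2)^(T+k)"
      by (simp add: sum.atLeastLessThan_Suc)
    also have "\<dots> = 2*(1/2)^T - 2*(1/2)^(T+k) + (1/2)^(T+k)" using Suc by simp
    also have "(1/2::real)^(T+k) = 2 * (1/2)^(T + Suc k)" by simp
    finally show ?case by simp
  qed simp
  show ?thesis
  proof (cases "T \<le> m")
    case True
    then have "m = T + (m - T)" by simp
    then have "(\<Sum>j\<in>{T..<m}. (1/2::real)^j) = 2*(1/2)^T - 2*(1/2)^(T+(m-T))" using eq by metis
    then show ?thesis by simp
  qed simp
qed

lemma choose_T:
  fixes x d :: real assumes x: "x \<ge> 1" and d: "d > 0"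
  shows "\<exists>T::nat. x powr (1/d) \<le> 2^T \<and> 2^T \<le> 2 * x powr (1/d) \<and> real T \<le> log 2 x / d + 1"
proof -
  define y where "y = log 2 x / d"
  have y0: "y \<ge> 0" unfolding y_def using x d by simp
  define T where "T = nat \<lceil>y\<rceil>"
  have T1: "real T \<ge> y" unfolding T_def by linarith
  have T2: "real T \<le> y + 1" unfolding T_def using y0 by linarith
  have xp: "x powr (1/d) = 2 powr y" unfolding y_def using x d
    by (simp add: powr_powr[symmetric] divide_inverse)
  have "2 powr y \<le> 2 powr (real T)" using T1 by simp
  moreover have "2 powr (real T) \<le> 2 powr (y + 1)" using T2 by simp
  moreover have "2 powr (y+1) = 2 * 2 powr y" by (simp add: powr_add)
  moreover have "(2::real) powr (real T) = 2^T" by (simp add: powr_realpow)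
  ultimately show ?thesis using xp T2 unfolding y_def by (intro exI[of _ T]) auto
qed

lemma series_bound:
  fixes d A :: real assumes d: "d > 0" and A: "A \<ge> 1"
  shows "\<exists>C>0. \<forall>(n::nat) J (N::nat \<Rightarrow> real). real n \<ge> A \<longrightarrow> n \<ge> 3 \<longrightarrow> finite J \<longrightarrow>
     (\<forall>j\<in>J. 0 \<le> N j \<and> N j \<le> real n \<and> N j \<le> A * (2^j) powr d) \<longrightarrow>
     (\<Sum>j\<in>J. N j / 2^j) \<le> C * sep_bound d n"
proof -
  define q where "q = (2::real) powr (d - 1)"
  have qpos: "q > 0" unfolding q_def by simp
  have termA: "N j / 2^j \<le> A * q^j" if "N j \<le> A * (2^j) powr d" for N :: "nat \<Rightarrow> real" and j
  proof -
    have "N j / 2^j \<le> A * (2^j) powr d / 2^j" using that by (simp add: divide_right_mono)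
    also have "\<dots> = A * q^j" unfolding q_def using pow_identity[of j d] by (metis times_divide_eq_right)
    finally show ?thesis .
  qed
  have termN: "N j / 2^j \<le> real n * (1/2)^j" if "N j \<le> real n" for N :: "nat \<Rightarrow> real" and j and n :: nat
    using that by (simp add: divide_right_mono power_one_over)
  show ?thesis
  proof (cases "d < 1")
    case True
    have q1: "q < 1" unfolding q_def using True by (simp add: powr_less_one)
    have s: "2 powr (1 - d) - 1 > (0::real)" using True by simp
    define C where "C = A / (1 - q) * (2 powr (1 - d) - 1)"
    have Cpos: "C > 0" unfolding C_def using A q1 s by simp
    show ?thesis
    proof (intro exI[of _ C] conjI allI impI Cpos)
      fix n :: nat and J and N :: "nat \<Rightarrow> real"
      assume fin: "finite J" and NJ: "\<forall>j\<in>J. 0 \<le> N j \<and> N j \<le> real n \<and> N j \<le> A * (2^j) powr d"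
      obtain m where m: "J \<subseteq> {..<m}" using fin finite_nat_iff_bounded by blast
      have "(\<Sum>j\<in>J. N j / 2^j) \<le> (\<Sum>j\<in>J. A * q^j)" using NJ termA by (intro sum_mono) auto
      also have "\<dots> \<le> (\<Sum>j<m. A * q^j)" using m A qpos by (intro sum_mono2) auto
      also have "\<dots> = A * ((q^m - 1) / (q - 1))" using q1 by (simp add: sum_distrib_left[symmetric] geometric_sum)
      also have "\<dots> = A * ((1 - q^m) / (1 - q))"
      proof -
        have "q - 1 \<noteq> 0" "1 - q \<noteq> 0" using q1 by auto
        then show ?thesis by (simp add: field_simps)
      qed
      also have "\<dots> \<le> A * (1 / (1 - q))" using A q1 qpos
        by (intro mult_left_mono divide_right_mono) auto
      also have "\<dots> = C * sep_bound d n" unfolding C_def sep_bound_def using True s by simp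
      finally show "(\<Sum>j\<in>J. N j / 2^j) \<le> C * sep_bound d n" .
    qed
  next
    case False
    then have d1: "d \<ge> 1" by simp
    have split: "(\<Sum>j\<in>J. N j / 2^j) \<le> (\<Sum>j<T. A * q^j) + 2 * real n * (1/2)^T"
      if fin: "finite J" and NJ: "\<forall>j\<in>J. 0 \<le> N j \<and> N j \<le> real n \<and> N j \<le> A * (2^j) powr d"
      for n :: nat and J and N :: "nat \<Rightarrow> real" and T :: nat
    proof -
      obtain m where m: "J \<subseteq> {..<m}" using fin finite_nat_iff_bounded by blast
      have "(\<Sum>j\<in>J. N j / 2^j) = (\<Sum>j\<in>J \<inter> {..<T}. N j / 2^j) + (\<Sum>j\<in>J - {..<T}. N j / 2^j)"
        using fin by (rule sum.Int_Diff)
      also have "(\<Sum>j\<in>J \<inter> {..<T}. N j / 2^j) \<le> (\<Sum>j\<in>J \<inter> {..<T}. A * q^j)"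
        using NJ termA by (intro sum_mono) auto
      also have "\<dots> \<le> (\<Sum>j<T. A * q^j)" using A qpos by (intro sum_mono2) auto
      also have "(\<Sum>j\<in>J - {..<T}. N j / 2^j) \<le> (\<Sum>j\<in>J - {..<T}. real n * (1/2)^j)"
        using NJ termN by (intro sum_mono) auto
      also have "\<dots> \<le> (\<Sum>j\<in>{T..<m}. real n * (1/2)^j)" using m by (intro sum_mono2) auto
      also have "\<dots> = real n * (\<Sum>j\<in>{T..<m}. (1/2)^j)" by (simp add: sum_distrib_left)
      also have "\<dots> \<le> real n * (2 * (1/2)^T)" by (intro mult_left_mono tail_sum) auto
      finally show ?thesis by simp
    qed
    show ?thesis
    proof (cases "d = 1")
      case True
      have q1: "q = 1" unfolding q_def using True by simp
      define C where "C = A / ln 2 + 3 * A / ln 3"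
      have l2: "ln (2::real) > 0" "ln (3::real) > 0" by simp_all
      have Cpos: "C > 0" unfolding C_def using A l2 by (intro add_pos_pos divide_pos_pos) auto
      show ?thesis
      proof (intro exI[of _ C] conjI allI impI Cpos)
        fix n :: nat and J and N :: "nat \<Rightarrow> real"
        assume nA: "real n \<ge> A" and n3: "n \<ge> 3" and fin: "finite J"
          and NJ: "\<forall>j\<in>J. 0 \<le> N j \<and> N j \<le> real n \<and> N j \<le> A * (2^j) powr d"
        have x1: "real n / A \<ge> 1" using nA A by simp
        obtain T :: nat where T: "(real n / A) powr (1/d) \<le> 2^T" "real T \<le> log 2 (real n / A) / d + 1"
          using choose_T[OF x1 d] by auto
        have S1: "(\<Sum>j<T. A * q^j) = A * real T" using q1 by simp
        have "real T \<le> log 2 (real n) + 1"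
        proof -
          have "log 2 (real n / A) \<le> log 2 (real n)" using A nA by (simp add: log_divide)
          then show ?thesis using T(2) True by simp
        qed
        then have "A * real T \<le> A * (log 2 (real n) + 1)" using A by (intro mult_left_mono) auto
        then have S1': "A * real T \<le> A * (ln (real n) / ln 2) + A"
          by (simp add: log_def algebra_simps)
        have "2 * real n * (1/2)^T = 2 * real n / 2^T" by (simp add: power_one_over)
        also have "\<dots> \<le> 2 * real n / (real n / A)"
        proof -
          have TT: "real n / A \<le> 2^T" using T(1) True x1 A by simp
          have p: "0 < real n / A" using x1 by simp
          have "0 < 2^T * (real n / A)" using p by (intro mult_pos_pos) auto
          then show ?thesis by (intro divide_left_mono[OF TT]) (auto simp: mult.commute simp del: times_divide_eq_right)
        qed
        also have "\<dots> = 2 * A" using n3 A by simp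
        finally have S2: "2 * real n * (1/2)^T \<le> 2 * A" .
        have ln3: "ln 3 \<le> ln (real n)" using n3 by simp
        have "(\<Sum>j\<in>J. N j / 2^j) \<le> A * (ln (real n) / ln 2) + 3 * A"
          using split[OF fin NJ, of T] S1 S1' S2 by linarith
        also have "3 * A \<le> 3 * A / ln 3 * ln (real n)"
          using ln3 A by (simp add: field_simps)
        also have "A * (ln (real n) / ln 2) + 3 * A / ln 3 * ln (real n) = C * sep_bound d n"
          unfolding C_def sep_bound_def using True by (simp add: field_simps)
        finally show "(\<Sum>j\<in>J. N j / 2^j) \<le> C * sep_bound d n" by simp
      qed
    next
      case False
      then have d1': "d > 1" using d1 by simp
      have q1: "q > 1" unfolding q_def using d1' by simp
      define C where "C = A * 2 powr (d-1) / (q - 1) + 2 * A powr (1/d)"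
      have Cpos: "C > 0" unfolding C_def using A q1 by (simp add: add_pos_pos)
      show ?thesis
      proof (intro exI[of _ C] conjI allI impI Cpos)
        fix n :: nat and J and N :: "nat \<Rightarrow> real"
        assume nA: "real n \<ge> A" and n3: "n \<ge> 3" and fin: "finite J"
          and NJ: "\<forall>j\<in>J. 0 \<le> N j \<and> N j \<le> real n \<and> N j \<le> A * (2^j) powr d"
        have x1: "real n / A \<ge> 1" using nA A by simp
        have npos: "real n > 0" using n3 by simp
        obtain T :: nat where T: "(real n / A) powr (1/d) \<le> 2^T" "2^T \<le> 2 * (real n / A) powr (1/d)"
          using choose_T[OF x1 d] by auto
        have qT: "q^T = (2^T) powr (d - 1)"
          unfolding q_def by (simp add: powr_realpow[symmetric] powr_powr mult.commute)
        have "(\<Sum>j<T. A * q^j) = A * ((q^T - 1) / (q - 1))" using q1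
          by (simp add: sum_distrib_left[symmetric] geometric_sum)
        also have "\<dots> \<le> A * (q^T / (q - 1))" using A q1 by (intro mult_left_mono divide_right_mono) auto
        also have "q^T \<le> (2 * (real n / A) powr (1/d)) powr (d - 1)"
          unfolding qT using T(2) d1 by (intro powr_mono2) auto
        also have "\<dots> = 2 powr (d-1) * (real n / A) powr (1 - 1/d)"
          using d by (simp add: powr_mult powr_powr field_simps)
        also have "(real n / A) powr (1 - 1/d) \<le> real n powr (1 - 1/d)"
          using A npos d1 by (intro powr_mono2) (auto simp: field_simps)
        finally have S1: "(\<Sum>j<T. A * q^j) \<le> A * (2 powr (d-1) * real n powr (1 - 1/d) / (q - 1))"
          using A q1 by (simp add: divide_right_mono mult_left_mono)
        have "2 * real n * (1/2)^T = 2 * real n / 2^T" by (simp add: power_one_over)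
        also have "\<dots> \<le> 2 * real n / (real n / A) powr (1/d)"
        proof -
          have p: "0 < (real n / A) powr (1/d)" using x1 npos A by simp
          have "0 < 2^T * (real n / A) powr (1/d)" using p by (intro mult_pos_pos) auto
          then show ?thesis using T(1) npos by (intro divide_left_mono) (auto simp: mult.commute simp del: times_divide_eq_right)
        qed
        also have "\<dots> = 2 * A powr (1/d) * real n powr (1 - 1/d)"
          using npos A by (simp add: powr_divide powr_diff field_simps)
        finally have S2: "2 * real n * (1/2)^T \<le> 2 * A powr (1/d) * real n powr (1 - 1/d)" .
        have "(\<Sum>j\<in>J. N j / 2^j) \<le> A * (2 powr (d-1) * real n powr (1 - 1/d) / (q - 1)) + 2 * A powr (1/d) * real n powr (1 - 1/d)"
          using split[OF fin NJ, of T] S1 S2 by linarith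
        also have "\<dots> = C * sep_bound d n" unfolding C_def sep_bound_def using d1' by (simp add: field_simps)
        finally show "(\<Sum>j\<in>J. N j / 2^j) \<le> C * sep_bound d n" .
      qed
    qed
  qed
qed



lemma log_scale:
  fixes l R :: real assumes l: "l > 0" "l < R"
  shows "l / R \<le> 1 / 2 ^ (nat \<lfloor>log 2 (R/l)\<rfloor>) \<and> l > R / 2 ^ (Suc (nat \<lfloor>log 2 (R/l)\<rfloor>))"
proof -
  define u where "u = R / l"
  have u1: "u > 1" unfolding u_def using l by simp
  define j where "j = nat \<lfloor>log 2 u\<rfloor>"
  have lg: "log 2 u > 0" using u1 by simp
  have j1: "real j \<le> log 2 u" unfolding j_def using lg by linarith
  have j2: "log 2 u < real j + 1" unfolding j_def using lg by linarith
  have "2 powr (real j) \<le> 2 powr (log 2 u)" using j1 by simp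
  then have a: "2 ^ j \<le> u" using u1 by (simp add: powr_realpow)
  have "2 powr (log 2 u) < 2 powr (real j + 1)" using j2 by simp
  then have b: "u < 2 ^ Suc j" using u1 by (simp add: powr_realpow[symmetric] powr_add)
  have "l / R \<le> 1 / 2 ^ j" using a l unfolding u_def by (simp add: field_simps)
  moreover have "l > R / 2 ^ Suc j" using b l unfolding u_def by (simp add: field_simps)
  ultimately show ?thesis unfolding j_def u_def by simp
qed

lemma scale_bound:
  fixes xs :: "'a::euclidean_space list" and P :: "'a set"
  assumes pack: "\<And>z r. r > 0 \<Longrightarrow> card {i. i < length xs \<and> dist (xs!i) (xs!(Suc i mod length xs)) > 5*r \<and> tour_edge xs i \<inter> cball z r \<noteq> {}} \<le> Kp"
    and fb: "fractal_bound delta c P" and fin: "finite P" and setP: "set xs = P"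
    and d: "delta > 0" and R: "R > 0"
    and S: "S \<subseteq> {i. i < length xs \<and> tour_edge xs i \<inter> cball z (2*R) \<noteq> {} \<and> dist (xs!i) (xs!(Suc i mod length xs)) < R
               \<and> dist (xs!i) (xs!(Suc i mod length xs)) > R / 2^(Suc j)}"
  shows "real (card S) \<le> real Kp * max c 1 * 37 powr delta * (2^j) powr delta"
proof -
  let ?n = "length xs"
  define eps where "eps = R / 2^(Suc j) / 6"
  have eps: "eps > 0" unfolding eps_def using R by simp
  have epsR: "eps \<le> R"
  proof -
    have "(1::real) \<le> 2^(Suc j)" by (rule one_le_power) simp
    then have "R / 2^(Suc j) \<le> R" using R by (simp add: divide_le_eq)
    then show ?thesis unfolding eps_def using R by simp
  qed
  obtain Ne where Ne: "eps_net Ne P eps" using net_exists[OF fin eps] by auto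
  define Q where "Q = Ne \<inter> cball z (3*R + eps)"
  have NeP: "Ne \<subseteq> P" using Ne unfolding eps_net_def by simp
  have finQ: "finite Q" unfolding Q_def using NeP by (intro finite_subset[OF _ fin]) auto
  have fb': "\<And>eps r N x. eps>0 \<Longrightarrow> r \<ge> 2*eps \<Longrightarrow> eps_net N P eps \<Longrightarrow> real (card (N \<inter> cball x r)) \<le> c*(r/eps) powr delta"
    using fb unfolding fractal_bound_def by blast
  have ratio: "(3*R + eps) / eps = 36 * 2^j + 1" unfolding eps_def using R by (simp add: field_simps)
  have cardQ: "real (card Q) \<le> max c 1 * 37 powr delta * (2^j) powr delta"
  proof -
    have "real (card Q) \<le> c * ((3*R + eps)/eps) powr delta"
      unfolding Q_def by (rule fb'[OF eps _ Ne]) (use R eps epsR in auto)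
    also have "\<dots> \<le> max c 1 * ((3*R + eps)/eps) powr delta" by (intro mult_right_mono) auto
    also have "((3*R + eps)/eps) powr delta \<le> (37 * 2^j) powr delta"
      unfolding ratio using d by (intro powr_mono2) auto
    also have "(37 * 2^j) powr delta = 37 powr delta * (2^j) powr delta" by (simp add: powr_mult)
    finally show ?thesis by (simp add: mult_left_mono mult.assoc)
  qed
  define Pk where "Pk = (\<lambda>q. {i. i < ?n \<and> dist (xs!i) (xs!(Suc i mod ?n)) > 5*eps \<and> tour_edge xs i \<inter> cball q eps \<noteq> {}})"
  have "S \<subseteq> (\<Union>q\<in>Q. Pk q)"
  proof
    fix i assume iS: "i \<in> S"
    then have i: "i < ?n" "tour_edge xs i \<inter> cball z (2*R) \<noteq> {}" "dist (xs!i) (xs!(Suc i mod ?n)) < R"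
      "dist (xs!i) (xs!(Suc i mod ?n)) > R / 2^(Suc j)" using S by auto
    have xi: "xs!i \<in> P" using i(1) setP by auto
    have "\<forall>p\<in>P. \<exists>q\<in>Ne. dist p q \<le> eps" using Ne unfolding eps_net_def by blast
    then obtain q where q: "q \<in> Ne" "dist (xs!i) q \<le> eps" using xi by blast
    obtain y where y: "y \<in> tour_edge xs i" "dist z y \<le> 2*R" using i(2) by auto
    have "dist (xs!i) y \<le> dist (xs!i) (xs!(Suc i mod ?n))"
      using y(1) dist_in_closed_segment[of y "xs!i" "xs!(Suc i mod ?n)"] unfolding tour_edge_def
      by (simp add: dist_commute)
    then have "dist z q \<le> 3*R + eps" using y(2) q(2) i(3)
      dist_triangle[of z q y] dist_triangle[of y q "xs!i"] by (simp add: dist_commute)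
    then have qQ: "q \<in> Q" unfolding Q_def using q by simp
    have "xs!i \<in> tour_edge xs i" unfolding tour_edge_def by simp
    moreover have "5*eps < dist (xs!i) (xs!(Suc i mod ?n))"
    proof -
      have "5*eps = (5/6) * (R / 2^(Suc j))" unfolding eps_def by simp
      also have "\<dots> \<le> R / 2^(Suc j)"
      proof -
        have "0 \<le> R / 2^(Suc j)" using R by simp
        then show ?thesis by (simp add: mult_left_le_one_le del: power_Suc)
      qed
      finally show ?thesis using i(4) by linarith
    qed
    ultimately have "i \<in> Pk q" unfolding Pk_def using i(1) q(2) by (auto simp: dist_commute)
    then show "i \<in> (\<Union>q\<in>Q. Pk q)" using qQ by blast
  qed
  moreover have "finite (\<Union>q\<in>Q. Pk q)"
    by (rule finite_subset[of _ "{..<?n}"]) (auto simp: Pk_def)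
  ultimately have "card S \<le> card (\<Union>q\<in>Q. Pk q)" by (intro card_mono)
  also have "\<dots> \<le> (\<Sum>q\<in>Q. card (Pk q))" by (rule card_UN_le[OF finQ])
  also have "\<dots> \<le> (\<Sum>q\<in>Q. Kp)" unfolding Pk_def by (intro sum_mono pack eps)
  also have "\<dots> = card Q * Kp" by simp
  finally have "real (card S) \<le> real (card Q) * real Kp" by (metis of_nat_le_iff of_nat_mult)
  also have "\<dots> \<le> max c 1 * 37 powr delta * (2^j) powr delta * real Kp"
    using cardQ by (intro mult_right_mono) auto
  finally show ?thesis by (simp add: algebra_simps)
qed

lemma long_bound:
  fixes xs :: "'a::euclidean_space list"
  assumes pack: "\<And>z r. r > 0 \<Longrightarrow> card {i. i < length xs \<and> dist (xs!i) (xs!(Suc i mod length xs)) > 5*r \<and> tour_edge xs i \<inter> cball z r \<noteq> {}} \<le> Kp"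
    and F: "finite F" "card F \<le> Kc" "cball z (2*R) \<subseteq> (\<Union>f\<in>F. cball f ((1/12)*(2*R)))" and R: "R > 0"
  shows "card {i. i < length xs \<and> tour_edge xs i \<inter> cball z (2*R) \<noteq> {} \<and> dist (xs!i) (xs!(Suc i mod length xs)) \<ge> R} \<le> Kc * Kp"
proof -
  let ?n = "length xs"
  define Pk where "Pk = (\<lambda>q. {i. i < ?n \<and> dist (xs!i) (xs!(Suc i mod ?n)) > 5*(R/6) \<and> tour_edge xs i \<inter> cball q (R/6) \<noteq> {}})"
  have sub: "{i. i < ?n \<and> tour_edge xs i \<inter> cball z (2*R) \<noteq> {} \<and> dist (xs!i) (xs!(Suc i mod ?n)) \<ge> R} \<subseteq> (\<Union>f\<in>F. Pk f)"
  proof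
    fix i assume "i \<in> {i. i < ?n \<and> tour_edge xs i \<inter> cball z (2*R) \<noteq> {} \<and> dist (xs!i) (xs!(Suc i mod ?n)) \<ge> R}"
    then have i: "i < ?n" "tour_edge xs i \<inter> cball z (2*R) \<noteq> {}" "dist (xs!i) (xs!(Suc i mod ?n)) \<ge> R" by auto
    obtain y where y: "y \<in> tour_edge xs i" "y \<in> cball z (2*R)" using i(2) by auto
    then obtain f where f: "f \<in> F" "y \<in> cball f ((1/12)*(2*R))" using F(3) by blast
    have "(1/12)*(2*R) = R/6" by simp
    then have "y \<in> tour_edge xs i \<inter> cball f (R/6)" using f y by simp
    moreover have "5*(R/6) < dist (xs!i) (xs!(Suc i mod ?n))" using i(3) R by simp
    ultimately have "i \<in> Pk f" unfolding Pk_def using i(1) by blast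
    then show "i \<in> (\<Union>f\<in>F. Pk f)" using f(1) by blast
  qed
  moreover have "finite (\<Union>q\<in>F. Pk q)"
    by (rule finite_subset[of _ "{..<?n}"]) (auto simp: Pk_def)
  ultimately have "card {i. i < ?n \<and> tour_edge xs i \<inter> cball z (2*R) \<noteq> {} \<and> dist (xs!i) (xs!(Suc i mod ?n)) \<ge> R} \<le> card (\<Union>f\<in>F. Pk f)"
    by (intro card_mono)
  also have "\<dots> \<le> (\<Sum>f\<in>F. card (Pk f))" by (rule card_UN_le[OF F(1)])
  also have "\<dots> \<le> (\<Sum>f\<in>F. Kp)" unfolding Pk_def using R by (intro sum_mono pack) simp
  also have "\<dots> = card F * Kp" by simp
  also have "\<dots> \<le> Kc * Kp" using F(2) by simp
  finally show ?thesis .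
qed



theorem theorem4:
  fixes delta c :: real
  assumes "DIM('a::euclidean_space) \<ge> 2"
    and "0 < delta" and "delta \<le> real DIM('a)"
  shows "\<exists>\<alpha>>0. \<exists>N0 B. \<forall>P :: 'a set. \<forall>xs.
           finite P \<longrightarrow> card P \<ge> N0 \<longrightarrow> fractal_bound delta c P \<longrightarrow> optimal_tour P xs \<longrightarrow>
           (\<exists>z r. r > 0
              \<and> real (card (P \<inter> ball z r)) \<le> (1 - \<alpha>) * real (card P)
              \<and> real (card {p\<in>P. dist z p > r}) \<le> (1 - \<alpha>) * real (card P)
              \<and> real (card {i. i < length xs \<and> tour_edge xs i \<inter> sphere z r \<noteq> {}})
                  \<le> B * sep_bound delta (card P))"
proof -
  have d: "delta > 0" using assms(2) .
  obtain K' :: nat where K'2: "K' \<ge> 2" and bal: "\<And>P::'a set. finite P \<Longrightarrow> card P > K' \<Longrightarrow> fractal_bound delta c P \<Longrightarrow>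
      \<exists>z R. R > 0 \<and> real (card (P \<inter> cball z R)) \<ge> real (card P) / K' \<and>
             real (card (P \<inter> cball z (2*R))) \<le> real (card P) / 2"
    by (rule balance[OF d, of c]) blast
  obtain Kp :: nat where pack: "\<And>(P::'a set) xs z r. optimal_tour P xs \<Longrightarrow> r > 0 \<Longrightarrow>
    card {i. i < length xs \<and> dist (xs!i) (xs!(Suc i mod length xs)) > 5*r \<and> tour_edge xs i \<inter> cball z r \<noteq> {}} \<le> Kp"
    by (rule packing) blast
  obtain Kc :: nat where cov: "\<And>(z::'a) r. r > 0 \<Longrightarrow>
     \<exists>F. finite F \<and> card F \<le> Kc \<and> cball z r \<subseteq> (\<Union>f\<in>F. cball f ((1/12)*r))"
    using cover_const[of "1/12"] by auto
  define A where "A = real Kp * max c 1 * 37 powr delta + 1"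
  have A1: "A \<ge> 1" unfolding A_def by simp
  obtain Cs where Cs: "Cs > 0" "\<forall>(n::nat) J (N::nat \<Rightarrow> real). real n \<ge> A \<longrightarrow> n \<ge> 3 \<longrightarrow> finite J \<longrightarrow>
     (\<forall>j\<in>J. 0 \<le> N j \<and> N j \<le> real n \<and> N j \<le> A * (2^j) powr delta) \<longrightarrow>
     (\<Sum>j\<in>J. N j / 2^j) \<le> Cs * sep_bound delta n"
    using series_bound[OF d A1] by blast
  define s0 where "s0 = (if delta > 1 then 1 else if delta = 1 then ln 3 else 1 / (2 powr (1 - delta) - 1))"
  have s0pos: "s0 > 0" unfolding s0_def by auto
  have sep_ge: "sep_bound delta n \<ge> s0" if "n \<ge> 3" for n :: nat
    unfolding s0_def sep_bound_def using that d by (auto intro: ge_one_powr_ge_zero)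
  define B where "B = Cs + (real (Kc * Kp) + 1) / s0"
  define N0 where "N0 = nat \<lceil>A\<rceil> + K' + 3"
  define \<alpha> where "\<alpha> = 1 / real K'"
  have \<alpha>pos: "\<alpha> > 0" unfolding \<alpha>_def using K'2 by simp
  have \<alpha>half: "\<alpha> \<le> 1/2" unfolding \<alpha>_def using K'2 by simp
  show ?thesis
  proof (rule exI[of _ \<alpha>], intro conjI \<alpha>pos exI[of _ N0] exI[of _ B] allI impI)
    fix P :: "'a set" and xs
    assume fin: "finite P" and big: "card P \<ge> N0" and fb: "fractal_bound delta c P" and opt: "optimal_tour P xs"
    define n where "n = card P"
    have tour: "tsp_tour P xs" using opt unfolding optimal_tour_def by simp
    then have dist_xs: "distinct xs" and setP: "set xs = P" unfolding tsp_tour_def by auto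
    have len: "length xs = n" unfolding n_def using dist_xs setP distinct_card by metis
    have n3: "n \<ge> 3" and nK: "n > K'" and nA: "real n \<ge> A"
      using big unfolding n_def N0_def by linarith+
    obtain z R where zR: "R > 0" "real (card (P \<inter> cball z R)) \<ge> real n / K'"
        "real (card (P \<inter> cball z (2*R))) \<le> real n / 2"
      using bal[OF fin nK[unfolded n_def] fb] unfolding n_def by blast
    have npos: "real n > 0" using n3 by simp
    define h where "h = R / real n"
    have hpos: "h > 0" unfolding h_def using zR(1) npos by simp
    define fe where "fe = (\<lambda>i k. tour_edge xs i \<inter> sphere z (R + real k * h) \<noteq> {})"
    obtain k where k: "k < n" and avg: "real (card {i. i < n \<and> fe i k}) * real n \<le> (\<Sum>i<n. real (card {k. k < n \<and> fe i k}))"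
      using below_avg[of n n fe] n3 by auto
    define r where "r = R + real k * h"
    have rR: "r \<ge> R" unfolding r_def using hpos by simp
    have kh: "real k' * h < R" if "k' < n" for k'
    proof -
      have "real k' * h < real n * h" using that hpos by simp
      also have "real n * h = R" unfolding h_def using npos by simp
      finally show ?thesis .
    qed
    have r2R: "r < 2*R" unfolding r_def using kh[OF k] by simp
    have rpos: "r > 0" using rR zR(1) by simp
    have inside: "real (card (P \<inter> ball z r)) \<le> (1 - \<alpha>) * real (card P)"
    proof -
      have "card (P \<inter> ball z r) \<le> card (P \<inter> cball z (2*R))"
        using fin r2R by (intro card_mono) auto
      then have "real (card (P \<inter> ball z r)) \<le> real n / 2" using zR(3) by linarith
      also have "\<dots> \<le> (1 - \<alpha>) * real n" using \<alpha>half npos by (simp add: field_simps)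
      finally show ?thesis unfolding n_def .
    qed
    have outside: "real (card {p\<in>P. dist z p > r}) \<le> (1 - \<alpha>) * real (card P)"
    proof -
      have sub: "{p\<in>P. dist z p > r} \<subseteq> P - (P \<inter> cball z R)" using rR by auto
      have "card {p\<in>P. dist z p > r} \<le> card (P - (P \<inter> cball z R))"
        using fin sub by (intro card_mono) auto
      also have "\<dots> = n - card (P \<inter> cball z R)" unfolding n_def using fin by (simp add: card_Diff_subset)
      finally have c0: "card {p\<in>P. dist z p > r} \<le> n - card (P \<inter> cball z R)" .
      have le: "card (P \<inter> cball z R) \<le> n" unfolding n_def using card_mono[OF fin, of "P \<inter> cball z R"] by auto
      have "real (card {p\<in>P. dist z p > r}) \<le> real (n - card (P \<inter> cball z R))"
        using c0 by (simp only: of_nat_le_iff)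
      also have "\<dots> = real n - real (card (P \<inter> cball z R))" using le by (simp add: of_nat_diff)
      also have "\<dots> \<le> real n - real n / K'" using zR(2) by simp
      also have "\<dots> = (1 - \<alpha>) * real n" unfolding \<alpha>_def by (simp add: field_simps)
      finally show ?thesis unfolding n_def .
    qed
    define l where "l = (\<lambda>i. dist (xs!i) (xs!(Suc i mod n)))"
    have lpos: "l i > 0" if "i < n" for i
    proof -
      have "Suc i mod n < n" using n3 by simp
      moreover have "Suc i mod n \<noteq> i"
      proof (cases "Suc i < n")
        case True then show ?thesis by simp
      next
        case False then have "Suc i = n" using that by simp
        then show ?thesis using n3 by simp
      qed
      ultimately have "xs!i \<noteq> xs!(Suc i mod n)" using dist_xs that len by (simp add: nth_eq_iff_index_eq)
      then show ?thesis unfolding l_def by simp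
    qed
    define Long where "Long = {i. i < n \<and> tour_edge xs i \<inter> cball z (2*R) \<noteq> {} \<and> l i \<ge> R}"
    define Short where "Short = {i. i < n \<and> tour_edge xs i \<inter> cball z (2*R) \<noteq> {} \<and> l i < R}"
    have LongS: "Long \<subseteq> {..<n}" and ShortS: "Short \<subseteq> {..<n}" unfolding Long_def Short_def by auto
    have finShort: "finite Short" using ShortS finite_subset by blast
    define g where "g = (\<lambda>i. (if i \<in> Long then real n else 0) + (if i \<in> Short then l i / h + 1 else 0))"
    have per: "real (card {k. k < n \<and> fe i k}) \<le> g i" if i: "i < n" for i
    proof (cases "tour_edge xs i \<inter> cball z (2*R) = {}")
      case True
      have "{k. k < n \<and> fe i k} = {}"
      proof -
        have "tour_edge xs i \<inter> sphere z (R + real k' * h) = {}" if "k' < n" for k'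
        proof -
          have "sphere z (R + real k' * h) \<subseteq> cball z (2*R)" using kh[OF that] by auto
          then show ?thesis using True by auto
        qed
        then show ?thesis unfolding fe_def by auto
      qed
      then have "card {k. k < n \<and> fe i k} = 0" by simp
      moreover have "g i \<ge> 0" unfolding g_def using hpos by (auto intro!: add_nonneg_nonneg simp: l_def)
      ultimately show ?thesis by (metis of_nat_0)
    next
      case False
      show ?thesis
      proof (cases "l i \<ge> R")
        case True
        then have "i \<in> Long" "i \<notin> Short" unfolding Long_def Short_def using i False by auto
        moreover have "card {k. k < n \<and> fe i k} \<le> n"
          using card_mono[of "{..<n}" "{k. k < n \<and> fe i k}"] by auto
        ultimately show ?thesis unfolding g_def by simp
      next
        case lt: False
        then have "i \<notin> Long" "i \<in> Short" unfolding Long_def Short_def using i False by auto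
        moreover have "real (card {k. k < n \<and> fe i k}) \<le> l i / h + 1"
          unfolding fe_def tour_edge_def l_def len by (rule radii_count[OF hpos])
        ultimately show ?thesis unfolding g_def by simp
      qed
    qed
    have sumg: "(\<Sum>i<n. g i) = real n * real (card Long) + (\<Sum>i\<in>Short. l i / h + 1)"
    proof -
      have "(\<Sum>i<n. g i) = (\<Sum>i<n. (if i \<in> Long then real n else 0)) + (\<Sum>i<n. (if i \<in> Short then l i / h + 1 else 0))"
        unfolding g_def by (rule sum.distrib)
      also have "(\<Sum>i<n. (if i \<in> Long then real n else 0)) = real n * real (card Long)"
      proof -
        have "Long \<inter> {..<n} = Long" "{..<n} \<inter> Long = Long" using LongS by auto
        then show ?thesis by (simp add: sum.If_cases)
      qed
      also have "(\<Sum>i<n. (if i \<in> Short then l i / h + 1 else 0)) = (\<Sum>i\<in>Short. l i / h + 1)"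
      proof -
        have "Short \<inter> {..<n} = Short" "{..<n} \<inter> Short = Short" using ShortS by auto
        then show ?thesis by (simp add: sum.If_cases)
      qed
      finally show ?thesis .
    qed
    have sumShort: "(\<Sum>i\<in>Short. l i / h + 1) \<le> real n * (\<Sum>i\<in>Short. l i / R) + real n"
    proof -
      have "(\<Sum>i\<in>Short. l i / h + 1) = real n * (\<Sum>i\<in>Short. l i / R) + real (card Short)"
      proof -
        have "l i / h + 1 = real n * (l i / R) + 1" for i unfolding h_def using zR(1) npos by (simp add: field_simps)
        then have "(\<Sum>i\<in>Short. l i / h + 1) = (\<Sum>i\<in>Short. real n * (l i / R) + 1)" by simp
        also have "\<dots> = real n * (\<Sum>i\<in>Short. l i / R) + real (card Short)"
          by (simp add: sum.distrib sum_distrib_left)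
        finally show ?thesis .
      qed
      moreover have "card Short \<le> n" using card_mono[OF _ ShortS] by simp
      ultimately show ?thesis by simp
    qed
    have count1: "real (card {i. i < n \<and> fe i k}) \<le> real (card Long) + (\<Sum>i\<in>Short. l i / R) + 1"
    proof -
      have "real (card {i. i < n \<and> fe i k}) * real n \<le> (\<Sum>i<n. g i)"
        using avg per by (meson order_trans lessThan_iff sum_mono)
      also have "\<dots> \<le> real n * (real (card Long) + (\<Sum>i\<in>Short. l i / R) + 1)"
        unfolding sumg using sumShort by (simp add: algebra_simps)
      finally show ?thesis using npos by (simp add: mult.commute)
    qed
    have packx: "\<And>z r. r > 0 \<Longrightarrow> card {i. i < length xs \<and> dist (xs!i) (xs!(Suc i mod length xs)) > 5*r \<and> tour_edge xs i \<inter> cball z r \<noteq> {}} \<le> Kp"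
      using pack[OF opt] by blast
    have longb: "real (card Long) \<le> real (Kc * Kp)"
    proof -
      obtain F where F: "finite F" "card F \<le> Kc" "cball z (2*R) \<subseteq> (\<Union>f\<in>F. cball f ((1/12)*(2*R)))"
        using cov[of "2*R" z] zR(1) by auto
      have "card Long \<le> Kc * Kp" using long_bound[OF packx F zR(1)] unfolding Long_def l_def len .
      then show ?thesis by linarith
    qed
    define jf where "jf = (\<lambda>i. nat \<lfloor>log 2 (R / l i)\<rfloor>)"
    have scale_i: "l i / R \<le> 1 / 2 ^ jf i \<and> l i > R / 2 ^ Suc (jf i)" if "i \<in> Short" for i
      unfolding jf_def using log_scale[of "l i" R] lpos[of i] that unfolding Short_def by auto
    define J where "J = jf ` Short"
    define NN where "NN = (\<lambda>j. real (card {i\<in>Short. jf i = j}))"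
    have finJ: "finite J" unfolding J_def using finShort by simp
    have NNb: "\<forall>j\<in>J. 0 \<le> NN j \<and> NN j \<le> real n \<and> NN j \<le> A * (2^j) powr delta"
    proof
      fix j assume "j \<in> J"
      have c1: "card {i\<in>Short. jf i = j} \<le> n"
        using card_mono[of "{..<n}" "{i\<in>Short. jf i = j}"] ShortS by auto
      have "real (card {i\<in>Short. jf i = j}) \<le> real Kp * max c 1 * 37 powr delta * (2^j) powr delta"
      proof (rule scale_bound[OF packx fb fin setP d zR(1)])
        show "{i \<in> Short. jf i = j} \<subseteq> {i. i < length xs \<and> tour_edge xs i \<inter> cball z (2*R) \<noteq> {} \<and> dist (xs!i) (xs!(Suc i mod length xs)) < R
               \<and> dist (xs!i) (xs!(Suc i mod length xs)) > R / 2^(Suc j)}"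
          using scale_i unfolding Short_def l_def len by auto
      qed
      also have "\<dots> \<le> A * (2^j) powr delta" unfolding A_def by (simp add: algebra_simps)
      finally show "0 \<le> NN j \<and> NN j \<le> real n \<and> NN j \<le> A * (2^j) powr delta"
        unfolding NN_def using c1 by simp
    qed
    have shortb: "(\<Sum>i\<in>Short. l i / R) \<le> Cs * sep_bound delta n"
    proof -
      have "(\<Sum>i\<in>Short. l i / R) = (\<Sum>j\<in>J. (\<Sum>i\<in>{i\<in>Short. jf i = j}. l i / R))"
        unfolding J_def by (rule sum.image_gen[OF finShort])
      also have "\<dots> \<le> (\<Sum>j\<in>J. NN j / 2^j)"
      proof (rule sum_mono)
        fix j assume "j \<in> J"
        have "(\<Sum>i\<in>{i\<in>Short. jf i = j}. l i / R) \<le> (\<Sum>i\<in>{i\<in>Short. jf i = j}. 1 / 2^j)"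
          using scale_i by (intro sum_mono) auto
        also have "\<dots> = NN j / 2^j" unfolding NN_def by simp
        finally show "(\<Sum>i\<in>{i\<in>Short. jf i = j}. l i / R) \<le> NN j / 2^j" .
      qed
      also have "\<dots> \<le> Cs * sep_bound delta n" using Cs(2) nA n3 finJ NNb by blast
      finally show ?thesis .
    qed
    have sep0: "sep_bound delta n \<ge> s0" using sep_ge[OF n3] .
    have "real (card {i. i < length xs \<and> tour_edge xs i \<inter> sphere z r \<noteq> {}}) = real (card {i. i < n \<and> fe i k})"
      unfolding fe_def r_def len ..
    also have "\<dots> \<le> real (Kc * Kp) + Cs * sep_bound delta n + 1" using count1 longb shortb by linarith
    also have "\<dots> \<le> B * sep_bound delta n"
    proof -
      have "real (Kc * Kp) + 1 = (real (Kc * Kp) + 1) / s0 * s0" using s0pos by simp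
      also have "\<dots> \<le> (real (Kc * Kp) + 1) / s0 * sep_bound delta n"
        using sep0 s0pos by (intro mult_left_mono) auto
      finally show ?thesis unfolding B_def by (simp add: algebra_simps)
    qed
    finally have edges: "real (card {i. i < length xs \<and> tour_edge xs i \<inter> sphere z r \<noteq> {}}) \<le> B * sep_bound delta (card P)"
      unfolding n_def .
    show "\<exists>z r. r > 0
              \<and> real (card (P \<inter> ball z r)) \<le> (1 - \<alpha>) * real (card P)
              \<and> real (card {p\<in>P. dist z p > r}) \<le> (1 - \<alpha>) * real (card P)
              \<and> real (card {i. i < length xs \<and> tour_edge xs i \<inter> sphere z r \<noteq> {}})
                  \<le> B * sep_bound delta (card P)"
      using rpos inside outside edges by blast
  qed
qed

end
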